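(* Let $G_1$ and $G_2$ be two vertex-disjoint 2-edge-colored graphs with Hamiltonian alternating cycles $C_1=x_0x_1\cdots x_{2n-1}x_0$ and $C_2=y_0y_1\cdots y_{2m-1}y_0$, respectively, and let $G\in G_1\oplus G_2$. Suppose there is no good pair in $G$ (between $C_1$ and $C_2$), and that for each $i\in\{1,2\}$ there is a vertex of $C_i$ which is non-singular with respect to $C_{3-i}$. Let $m_1=\min\{n,m\}$ and $M_2=\max\{n,m\}$. Then for each vertex $v\in V(G)$ and each even integer $\ell\in[4,4m_1]\cup[2M_2,2n+2m]$, there is an alternating cycle of length $\ell$ in $G$ passing through $v$.
   Context: All graphs are simple, with edges colored red or blue. An alternating cycle is a cycle in which consecutive edges have different colors; a Hamiltonian alternating cycle of a graph is an alternating cycle through all its vertices. For vertex-disjoint 2-edge-colored graphs $G_1,G_2$, the colored generalized sum $G_1\oplus G_2$ is the set of 2-edge-colored graphs $G$ with $V(G)=V(G_1)\cup V(G_2)$, $G\langle V(G_i)\rangle=G_i$ with the same coloring, and exactly one edge (of arbitrary fixed color) between each $u\in V(G_1)$ and $w\in V(G_2)$; these latter edges are the exterior edges. For $v$ on an alternating cycle $C$, $v^r$ (resp. $v^b$) is the neighbor of $v$ on $C$ with $vv^r$ red (resp. $vv^b$ blue). For an exterior edge $vw$ with $v\in V(C_1)$, $w\in V(C_2)$: if $vw$ is red, $vw,v^rw^r$ is a good pair if $v^rw^r$ is red; if $vw$ is blue, $vw,v^bw^b$ is a good pair if $v^bw^b$ is blue. A vertex $v\in V(C_i)$ is singular with respect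 to $C_{3-i}$ if all edges between $v$ and $V(C_{3-i})$ have the same color, and non-singular otherwise. For integers $a\le b$, $[a,b]=\{a,a+1,\dots,b\}$. *)

theory Defs
  imports Main
begin

datatype color = Red | Blue

text \<open>A 2-edge-colored simple graph on vertex set V: c u v = Some k iff uv is an edge of colour k.\<close>
definition colgraph :: "'a set \<Rightarrow> ('a \<Rightarrow> 'a \<Rightarrow> color option) \<Rightarrow> bool" where
  "colgraph V c \<longleftrightarrow> finite V \<and> (\<forall>u v. c u v = c v u) \<and> (\<forall>v. c v v = None) \<and>
     (\<forall>u v. c u v \<noteq> None \<longrightarrow> u \<in> V \<and> v \<in> V)"

definition alt_cycle :: "('a \<Rightarrow> 'a \<Rightarrow> color option) \<Rightarrow> 'a list \<Rightarrow> bool" where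
  "alt_cycle c xs \<longleftrightarrow> distinct xs \<and> length xs \<ge> 3 \<and>
     (\<forall>i < length xs. c (xs ! i) (xs ! ((i + 1) mod length xs)) \<noteq> None) \<and>
     (\<forall>i < length xs. c (xs ! i) (xs ! ((i + 1) mod length xs)) \<noteq>
                      c (xs ! ((i + 1) mod length xs)) (xs ! ((i + 2) mod length xs)))"

text \<open>u is the neighbour of v on the cycle xs joined to v by an edge of colour k (u = v^k).\<close>
definition cyc_nbr :: "('a \<Rightarrow> 'a \<Rightarrow> color option) \<Rightarrow> 'a list \<Rightarrow> color \<Rightarrow> 'a \<Rightarrow> 'a \<Rightarrow> bool" where
  "cyc_nbr c xs k v u \<longleftrightarrow> (\<exists>i < length xs. xs ! i = v \<and>
     (u = xs ! ((i + 1) mod length xs) \<or> u = xs ! ((i + length xs - 1) mod length xs)) \<and>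
     c v u = Some k)"

definition in_colored_sum ::
  "'a set \<Rightarrow> ('a \<Rightarrow> 'a \<Rightarrow> color option) \<Rightarrow> 'a set \<Rightarrow> ('a \<Rightarrow> 'a \<Rightarrow> color option) \<Rightarrow>
   'a set \<Rightarrow> ('a \<Rightarrow> 'a \<Rightarrow> color option) \<Rightarrow> bool" where
  "in_colored_sum V c V1 c1 V2 c2 \<longleftrightarrow> colgraph V c \<and> V = V1 \<union> V2 \<and>
     (\<forall>u \<in> V1. \<forall>v \<in> V1. c u v = c1 u v) \<and> (\<forall>u \<in> V2. \<forall>v \<in> V2. c u v = c2 u v) \<and>
     (\<forall>u \<in> V1. \<forall>w \<in> V2. c u w \<noteq> None)"

definition no_good_pair ::
  "('a \<Rightarrow> 'a \<Rightarrow> color option) \<Rightarrow> 'a list \<Rightarrow> 'a list \<Rightarrow> bool" where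
  "no_good_pair c C1 C2 \<longleftrightarrow> (\<forall>v w v' w' k. v \<in> set C1 \<longrightarrow> w \<in> set C2 \<longrightarrow> c v w = Some k \<longrightarrow>
      cyc_nbr c C1 k v v' \<longrightarrow> cyc_nbr c C2 k w w' \<longrightarrow> c v' w' \<noteq> Some k)"

definition non_singular :: "('a \<Rightarrow> 'a \<Rightarrow> color option) \<Rightarrow> 'a \<Rightarrow> 'a set \<Rightarrow> bool" where
  "non_singular c v W \<longleftrightarrow> (\<exists>w \<in> W. \<exists>w' \<in> W. c v w = Some Red \<and> c v w' = Some Blue)"

end

theory Submission
  imports Defs
begin


fun flip :: "color \<Rightarrow> color" where
  "flip Red = Blue" | "flip Blue = Red"

definition altc :: "color \<Rightarrow> int \<Rightarrow> color" where
  "altc p i = (if even i then p else flip p)"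

lemma flip_flip[simp]: "flip (flip k) = k" by (cases k) auto
lemma flip_neq[simp]: "flip k \<noteq> k" "k \<noteq> flip k" by (cases k; simp)+
lemma color_other: "k \<noteq> k' \<Longrightarrow> k' = flip k" by (cases k; cases k') auto
lemma flip_inj[simp]: "flip a = flip b \<longleftrightarrow> a = b" by (cases a; cases b) auto

lemma altc_eq_iff: "altc p i = altc q j \<longleftrightarrow> (p = q \<longleftrightarrow> (even i \<longleftrightarrow> even j))"
  unfolding altc_def by (cases p; cases q) auto

lemma altc_shift: "altc (altc p a) b = altc p (a + b)"
  unfolding altc_def by auto

lemma altc_flip: "flip (altc p i) = altc p (i + 1)" "altc (flip p) i = altc p (i+1)"
  unfolding altc_def by auto

lemma altc_0[simp]: "altc p 0 = p" unfolding altc_def by auto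

lemma opt_other: "x \<noteq> None \<Longrightarrow> x \<noteq> Some k \<Longrightarrow> x = Some (flip k)"
  by (cases x) (auto intro: color_other)

lemma alt_from_col:
  assumes d: "distinct xs" and L3: "length xs \<ge> 3" and ev: "even (length xs)"
    and e: "\<And>t. t < length xs \<Longrightarrow> c (xs ! t) (xs ! ((t+1) mod length xs)) = Some (altc p (int t))"
  shows "alt_cycle c xs"
  unfolding alt_cycle_def
proof (intro conjI allI impI)
  show "distinct xs" by fact
  show "3 \<le> length xs" by fact
  fix i assume i: "i < length xs"
  show "c (xs ! i) (xs ! ((i + 1) mod length xs)) \<noteq> None" using e[OF i] by simp
  let ?L = "length xs"
  have i1: "(i+1) mod ?L < ?L" by (rule mod_less_divisor) (use i in auto)
  have m2: "((i + 1) mod ?L + 1) mod ?L = (i+2) mod ?L" by (simp add: mod_Suc_eq)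
  have par: "even (int ((i+1) mod ?L)) \<longleftrightarrow> even (int i + 1)"
  proof -
    have "even ((i+1) mod ?L) \<longleftrightarrow> even (i+1)" using ev
      by (simp add: even_iff_mod_2_eq_zero mod_mod_cancel)
    then show ?thesis by simp
  qed
  show "c (xs ! i) (xs ! ((i + 1) mod ?L)) \<noteq> c (xs ! ((i + 1) mod ?L)) (xs ! ((i + 2) mod ?L))"
    using e[OF i] e[OF i1] m2 par by (simp add: altc_eq_iff)
qed



locale twocyc =
  fixes c :: "'a \<Rightarrow> 'a \<Rightarrow> color option" and xi yi :: "int \<Rightarrow> 'a" and n m :: nat and px py :: color
  assumes n2: "2 \<le> n" and m2: "2 \<le> m"
  and xper: "\<And>i. xi (i mod (2 * int n)) = xi i"
  and yper: "\<And>j. yi (j mod (2 * int m)) = yi j"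
  and xinj: "inj_on xi {0..<2 * int n}"
  and yinj: "inj_on yi {0..<2 * int m}"
  and csym: "\<And>u v. c u v = c v u"
  and xedge: "\<And>i. c (xi i) (xi (i+1)) = Some (altc px i)"
  and yedge: "\<And>j. c (yi j) (yi (j+1)) = Some (altc py j)"
  and xy: "\<And>i j. xi i \<noteq> yi j"
  and cross: "\<And>i j. c (xi i) (yi j) \<noteq> None"
  and step: "\<And>i j. altc px i = altc py j \<Longrightarrow> c (xi i) (yi j) = Some (altc px i) \<Longrightarrow>
                c (xi (i+1)) (yi (j+1)) = Some (altc px (i+1))"
  and ncA: "\<exists>i j. altc px i = altc py j \<and> c (xi i) (yi j) = Some (altc px i)"
  and ncB: "\<exists>i j. altc px i = altc py j \<and> c (xi i) (yi j) \<noteq> Some (altc px i)"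
begin

definition al :: "int \<Rightarrow> int \<Rightarrow> bool" where "al i j \<longleftrightarrow> altc px i = altc py j"
definition A :: "int \<Rightarrow> int \<Rightarrow> bool" where "A i j \<longleftrightarrow> al i j \<and> c (xi i) (yi j) = Some (altc px i)"
definition B :: "int \<Rightarrow> int \<Rightarrow> bool" where "B i j \<longleftrightarrow> al i j \<and> \<not> A i j"

lemma xper_add: "xi (i + 2 * int n * k) = xi i"
  by (metis xper mod_mult_self1 mult.commute)
lemma yper_add: "yi (j + 2 * int m * k) = yi j"
  by (metis yper mod_mult_self1 mult.commute)

lemma altc_per: "altc p (i + 2 * int q * k) = altc p i"
  unfolding altc_def by simp

lemma al_shift: "al (i + t) (j + t) \<longleftrightarrow> al i j"
  unfolding al_def by (auto simp: altc_eq_iff)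

lemma B_alt: "B i j \<longleftrightarrow> al i j \<and> c (xi i) (yi j) = Some (altc px (i + 1))"
  unfolding B_def A_def using cross[of i j] opt_other[of "c (xi i) (yi j)" "altc px i"]
  by (auto simp: altc_flip altc_eq_iff)

lemma A_step: "A i j \<Longrightarrow> A (i+1) (j+1)"
  unfolding A_def using step al_shift[of i 1 j] unfolding al_def by auto

lemma A_per_i: "A (i + 2 * int n * k) j \<longleftrightarrow> A i j"
  unfolding A_def al_def by (simp add: xper_add altc_per)
lemma A_per_j: "A i (j + 2 * int m * k) \<longleftrightarrow> A i j"
  unfolding A_def al_def by (simp add: yper_add altc_per)

lemma A_shift_nat: "A i j \<Longrightarrow> A (i + int t) (j + int t)"
proof (induction t)
  case 0 then show ?case by simp
next
  case (Suc t)
  have e: "i + int (Suc t) = (i + int t) + 1" "j + int (Suc t) = (j + int t) + 1" by simp_all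
  show ?case unfolding e by (rule A_step[OF Suc.IH[OF Suc.prems]])
qed

lemma A_back: "A (i+1) (j+1) \<Longrightarrow> A i j"
proof -
  assume a: "A (i+1) (j+1)"
  define t where "t = nat (2 * int n * (2 * int m) - 1)"
  have tt: "int t = 2 * int n * (2 * int m) - 1" unfolding t_def using n2 m2 by simp
  have e: "i + 1 + int t = i + 2 * int n * (2 * int m)" "j + 1 + int t = j + 2 * int m * (2 * int n)"
    by (simp_all add: tt algebra_simps)
  from A_shift_nat[OF a, of t] have "A (i + 2 * int n * (2 * int m)) (j + 2 * int m * (2 * int n))"
    by (simp only: e)
  then have "A i (j + 2 * int m * (2 * int n))" by (simp only: A_per_i)
  then show "A i j" by (simp only: A_per_j)
qed

lemma A_shift: "A (i + t) (j + t) \<longleftrightarrow> A i j"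
proof (cases "t \<ge> 0")
  case True
  have bk: "A (i + int s) (j + int s) \<Longrightarrow> A i j" for s
  proof (induction s)
    case 0 then show ?case by simp
  next
    case (Suc s)
    have e: "i + int (Suc s) = (i + int s) + 1" "j + int (Suc s) = (j + int s) + 1" by simp_all
    show ?case using Suc unfolding e using A_back by blast
  qed
  show ?thesis using A_shift_nat[of i j "nat t"] bk[of "nat t"] True by auto
next
  case False
  have bk: "A (i + int s) (j + int s) \<Longrightarrow> A i j" for s i j
  proof (induction s arbitrary: i j)
    case 0 then show ?case by simp
  next
    case (Suc s)
    have e: "i + int (Suc s) = (i + int s) + 1" "j + int (Suc s) = (j + int s) + 1" by simp_all
    show ?case using Suc unfolding e using A_back by blast
  qed
  show ?thesis using A_shift_nat[of "i+t" "j+t" "nat (-t)"] bk[of "i+t" "nat (-t)" "j+t"] False by auto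
qed

lemma B_shift: "B (i + t) (j + t) \<longleftrightarrow> B i j"
  unfolding B_def using A_shift al_shift by auto

lemma A_perj_n: "A i (j + 2 * int n) \<longleftrightarrow> A i j"
proof -
  have "A i (j + 2 * int n) \<longleftrightarrow> A ((i - 2 * int n) + 2 * int n) (j + 2 * int n)" by simp
  also have "\<dots> \<longleftrightarrow> A (i - 2 * int n) j" by (rule A_shift)
  also have "\<dots> \<longleftrightarrow> A (i - 2 * int n + 2 * int n * 1) j" by (rule A_per_i[symmetric])
  finally show ?thesis by simp
qed

lemma al_per: "al i (j + 2 * int q * k) \<longleftrightarrow> al i j"
  unfolding al_def by (simp add: altc_per)

lemma B_perj: "B i (j + 2 * int n * k1 + 2 * int m * k2) \<longleftrightarrow> B i j"
proof -
  have "A i (j + 2 * int n * k) \<longleftrightarrow> A i j" for j k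
  proof -
    have "A i (j + 2 * int n * k) \<longleftrightarrow> A ((i - 2 * int n * k) + 2 * int n * k) (j + 2 * int n * k)" by simp
    also have "\<dots> \<longleftrightarrow> A (i - 2 * int n * k) j" by (rule A_shift)
    also have "\<dots> \<longleftrightarrow> A (i - 2 * int n * k + 2 * int n * k) j" by (rule A_per_i[symmetric])
    finally show ?thesis by simp
  qed
  then have "A i (j + 2 * int n * k1 + 2 * int m * k2) \<longleftrightarrow> A i j"
    using A_per_j by (metis add.commute add.left_commute)
  moreover have "al i (j + 2 * int n * k1 + 2 * int m * k2) \<longleftrightarrow> al i j"
    using al_per by (metis add.commute add.left_commute)
  ultimately show ?thesis unfolding B_def by simp
qed

lemma A_perj: "A i (j + 2 * int n * k1 + 2 * int m * k2) \<longleftrightarrow> A i j"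
proof -
  have "A i (j + 2 * int n * k) \<longleftrightarrow> A i j" for j k
  proof -
    have "A i (j + 2 * int n * k) \<longleftrightarrow> A ((i - 2 * int n * k) + 2 * int n * k) (j + 2 * int n * k)" by simp
    also have "\<dots> \<longleftrightarrow> A (i - 2 * int n * k) j" by (rule A_shift)
    also have "\<dots> \<longleftrightarrow> A (i - 2 * int n * k + 2 * int n * k) j" by (rule A_per_i[symmetric])
    finally show ?thesis by simp
  qed
  then show ?thesis using A_per_j by (metis add.commute add.left_commute)
qed

end


lemma ivt_nat: "P 0 \<Longrightarrow> \<not> P s \<Longrightarrow> \<exists>t<s. P t \<and> \<not> P (Suc t)"
proof (induction s)
  case 0 then show ?case by simp
next
  case (Suc s)
  then show ?case by (cases "P s") (auto intro: less_SucI)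
qed

context twocyc begin

lemma al_even: "even D \<Longrightarrow> al i (j + D) \<longleftrightarrow> al i j"
  unfolding al_def by (auto simp: altc_eq_iff)

lemma row:
  assumes D: "D = 2 \<or> D = -2"
  shows "\<exists>j. A a j \<and> B a (j + D)"
proof -
  obtain i1 j1 where a1: "A i1 j1" using ncA unfolding A_def al_def by blast
  obtain i2 j2 where b2: "B i2 j2" using ncB unfolding B_def A_def al_def by blast
  define u where "u = j1 + (a - i1)"
  define w where "w = j2 + (a - i2)"
  have au: "A a u" using A_shift[of i1 "a - i1" j1] a1 unfolding u_def by simp
  have bw: "B a w" using B_shift[of i2 "a - i2" j2] b2 unfolding w_def by simp
  have "altc py u = altc py w" using au bw unfolding A_def B_def al_def by simp
  then have "even u \<longleftrightarrow> even w" by (simp add: altc_eq_iff)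
  then have "even (w - u)" by simp
  then obtain e where e: "w - u = 2 * e" by (rule evenE)
  define \<sigma> :: int where "\<sigma> = D div 2"
  have sig: "D = 2 * \<sigma>" "\<sigma> * \<sigma> = 1" using D unfolding \<sigma>_def by auto
  define q where "q = (\<sigma> * e) div int m"
  define s where "s = nat ((\<sigma> * e) mod int m)"
  have "int m > 0" using m2 by simp
  then have nn: "0 \<le> (\<sigma> * e) mod int m" by simp
  have s_eq: "int s = \<sigma> * e - int m * q"
  proof -
    have "int s = (\<sigma> * e) mod int m" unfolding s_def using nn by simp
    also have "\<dots> = \<sigma> * e - int m * q" unfolding q_def by (metis minus_div_mult_eq_mod mult.commute)
    finally show ?thesis .
  qed
  have "u + D * int s = w + 2 * int m * (- \<sigma> * q)"
    using e sig by (simp add: s_eq algebra_simps)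
  then have nA: "\<not> A a (u + D * int s)" using bw A_per_j[of a w "- \<sigma> * q"] unfolding B_def by simp
  obtain t where t: "A a (u + D * int t)" "\<not> A a (u + D * int (Suc t))"
    using ivt_nat[of "\<lambda>t. A a (u + D * int t)" s] au nA by auto
  have "u + D * int (Suc t) = (u + D * int t) + D" by (simp add: algebra_simps)
  moreover have "al a ((u + D * int t) + D)" using t(1) al_even[of D a] sig unfolding A_def by simp
  ultimately show ?thesis using t unfolding B_def by metis
qed

end


lemma altc_transfer: "altc p X = altc q Y \<Longrightarrow> altc q Y' = altc p (X + (Y' - Y))"
  by (auto simp: altc_eq_iff)

lemma altc_par: "even (X - Y) \<Longrightarrow> altc p X = altc p Y"
  by (auto simp: altc_eq_iff)

lemma window_eq:
  fixes N :: int
  assumes "u mod N = u' mod N" "\<bar>u - u'\<bar> < N" shows "u = u'"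
proof (rule ccontr)
  assume ne: "u \<noteq> u'"
  have "N dvd (u - u')" using assms(1) by (simp add: mod_eq_dvd_iff)
  then have "\<bar>N\<bar> \<le> \<bar>u - u'\<bar>" using ne by (intro dvd_imp_le_int) auto
  then show False using assms(2) by simp
qed

context twocyc begin

lemma xi_eq: "xi u = xi u' \<Longrightarrow> \<bar>u - u'\<bar> < 2 * int n \<Longrightarrow> u = u'"
proof -
  assume e: "xi u = xi u'" and w: "\<bar>u - u'\<bar> < 2 * int n"
  have pos: "2 * int n > 0" using n2 by simp
  have "xi (u mod (2 * int n)) = xi (u' mod (2 * int n))" using e xper by simp
  then have "u mod (2 * int n) = u' mod (2 * int n)"
    using xinj pos by (auto dest: inj_onD)
  then show ?thesis using window_eq w by blast
qed

lemma yi_eq: "yi u = yi u' \<Longrightarrow> \<bar>u - u'\<bar> < 2 * int m \<Longrightarrow> u = u'"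
proof -
  assume e: "yi u = yi u'" and w: "\<bar>u - u'\<bar> < 2 * int m"
  have pos: "2 * int m > 0" using m2 by simp
  have "yi (u mod (2 * int m)) = yi (u' mod (2 * int m))" using e yper by simp
  then have "u mod (2 * int m) = u' mod (2 * int m)"
    using yinj pos by (auto dest: inj_onD)
  then show ?thesis using window_eq w by blast
qed

lemma twoseg:
  assumes k1: "1 \<le> k1" "k1 \<le> 2*n" and k2: "1 \<le> k2" "k2 \<le> 2*m" and L: "3 \<le> k1 + k2" "even (k1+k2)"
    and hA: "A (a + int k1 - 1) j0" and hB: "B a (j0 - int k2 + 1)"
  shows "\<exists>xs. alt_cycle c xs \<and> length xs = k1 + k2 \<and> xi a \<in> set xs \<and> yi j0 \<in> set xs"
proof -
  define L where "L = k1 + k2"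
  define g where "g t = (if t < k1 then xi (a + int t) else yi (j0 - int (t - k1)))" for t
  define xs where "xs = map g [0..<L]"
  have len: "length xs = L" unfolding xs_def by simp
  have nth: "t < L \<Longrightarrow> xs ! t = g t" for t unfolding xs_def by simp
  have inj: "inj_on g {0..<L}"
  proof (rule inj_onI)
    fix t t' assume t: "t \<in> {0..<L}" and t': "t' \<in> {0..<L}" and e: "g t = g t'"
    show "t = t'"
    proof (cases "t < k1"; cases "t' < k1")
      assume "t < k1" "t' < k1"
      then have "xi (a + int t) = xi (a + int t')" using e unfolding g_def by simp
      then have "a + int t = a + int t'" by (rule xi_eq) (use \<open>t < k1\<close> \<open>t' < k1\<close> k1 in auto)
      then show ?thesis by simp
    next
      assume "t < k1" "\<not> t' < k1" then show ?thesis using e xy unfolding g_def by simp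
    next
      assume "\<not> t < k1" "t' < k1" then show ?thesis using e xy unfolding g_def by (simp add: xy[symmetric])
    next
      assume a1: "\<not> t < k1" "\<not> t' < k1"
      then have "yi (j0 - int (t - k1)) = yi (j0 - int (t' - k1))" using e unfolding g_def by simp
      then have "j0 - int (t - k1) = j0 - int (t' - k1)"
        by (rule yi_eq) (use a1 t t' k2 in \<open>auto simp: L_def\<close>)
      then show ?thesis using a1 by simp
    qed
  qed
  have dist: "distinct xs" unfolding xs_def using inj by (simp add: distinct_map)
  have al0: "altc px (a + int k1 - 1) = altc py j0" using hA unfolding A_def al_def by simp
  have edge: "c (xs ! t) (xs ! ((t+1) mod L)) = Some (altc (altc px a) (int t))" if t: "t < L" for t
  proof -
    have tgt: "altc (altc px a) (int t) = altc px (a + int t)" by (rule altc_shift)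
    consider (x) "t + 1 < k1" | (xy) "t + 1 = k1" | (y) "k1 \<le> t" "t + 1 < L" | (last) "t + 1 = L"
      using t by linarith
    then show ?thesis
    proof cases
      case x
      then have "(t+1) mod L = t + 1" using t unfolding L_def by simp
      moreover have "xs ! (t+1) = xi (a + int t + 1)" using nth[of "t+1"] x unfolding L_def g_def
        by (simp add: algebra_simps)
      moreover have "xs ! t = xi (a + int t)" using nth[of t] x t unfolding g_def by simp
      ultimately show ?thesis using xedge[of "a + int t"] unfolding tgt by simp
    next
      case xy
      then have "(t+1) mod L = t + 1" "t+1 < L" using k2 unfolding L_def by simp_all
      moreover have e: "a + int t = a + int k1 - 1" using xy by simp
      moreover have "c (xi (a + int t)) (yi j0) = Some (altc px (a + int t))"
        using hA unfolding A_def by (simp add: e)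
      moreover have "xs ! t = xi (a + int t)" using nth[of t] xy t unfolding g_def by simp
      moreover have "xs ! (t+1) = yi j0" using nth[of "t+1"] xy k2 unfolding g_def L_def by simp
      ultimately show ?thesis unfolding tgt by simp
    next
      case y
      then have m1: "(t+1) mod L = t + 1" by simp
      define J where "J = j0 - int (t - k1)"
      have gt: "g t = yi J" using y unfolding g_def J_def by simp
      have gt1: "g (t+1) = yi (J - 1)" using y unfolding g_def J_def by (simp add: of_nat_diff algebra_simps)
      have "c (yi J) (yi (J - 1)) = Some (altc py (J - 1))" using yedge[of "J - 1"] csym by simp
      moreover have "altc py (J - 1) = altc px (a + int t)"
      proof -
        have "altc py (J - 1) = altc px ((a + int k1 - 1) + ((J - 1) - j0))"
          by (rule altc_transfer[OF al0])
        also have "\<dots> = altc px (a + int t)"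
          by (rule altc_par) (use y in \<open>simp add: J_def of_nat_diff\<close>)
        finally show ?thesis .
      qed
      ultimately show ?thesis using y m1 nth[of t] nth[of "t+1"] gt gt1 tgt by simp
    next
      case last
      have m0: "(t+1) mod L = 0" using last by simp
      have x0: "xs ! 0 = xi a" using nth[of 0] k1 k2 unfolding g_def L_def by simp
      have tk: "\<not> t < k1" "int (t - k1) = int k2 - 1" using last k2 unfolding L_def by auto
      have xt: "xs ! t = yi (j0 - int k2 + 1)" using nth[of t] t tk unfolding g_def by (simp add: algebra_simps)
      have "c (yi (j0 - int k2 + 1)) (xi a) = Some (altc px (a + 1))"
        using hB csym unfolding B_alt by simp
      moreover have "altc px (a + 1) = altc px (a + int t)"
      proof (rule altc_par)
        have "odd t" using last L(2) unfolding L_def by presburger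
        then show "even (a + 1 - (a + int t))" by simp
      qed
      ultimately show ?thesis using m0 x0 xt tgt by simp
    qed
  qed
  have "alt_cycle c xs"
    by (rule alt_from_col[where p = "altc px a"]) (use dist len L edge in \<open>auto simp: L_def\<close>)
  moreover have "xi a \<in> set xs" using nth[of 0] k1 k2 unfolding g_def L_def
    by (metis len L_def add_pos_pos less_numeral_extra(1) nth_mem of_nat_0 add.right_neutral le_less_trans zero_less_one not_less)
  moreover have "yi j0 \<in> set xs" using nth[of k1] k1 k2 unfolding g_def L_def
    by (metis len L_def less_add_same_cancel1 less_le_trans nth_mem zero_less_one diff_self_eq_0 of_nat_0 diff_zero less_irrefl)
  ultimately show ?thesis using len unfolding L_def by blast
qed
end


context twocyc begin

lemma xi_off: "xi (a + u) = xi (a + u') \<Longrightarrow> 0 \<le> u \<Longrightarrow> u < 2 * int n \<Longrightarrow> 0 \<le> u' \<Longrightarrow> u' < 2 * int n \<Longrightarrow> u = u'"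
  using xi_eq[of "a+u" "a+u'"] by auto
lemma yi_off: "yi (a - u) = yi (a - u') \<Longrightarrow> 0 \<le> u \<Longrightarrow> u < 2 * int m \<Longrightarrow> 0 \<le> u' \<Longrightarrow> u' < 2 * int m \<Longrightarrow> u = u'"
  using yi_eq[of "a-u" "a-u'"] by auto

lemma hamcyc:
  assumes k1: "1 \<le> k1" "k1 < 2*n" "even k1"
    and h1: "A (a + int k1 - 1) j0" and h2: "B (a + int k1) (j0 - 1)"
    and h3: "A (a - 1) (j0 - 2)" and h4: "B a (j0 + 1)"
  shows "\<exists>xs. alt_cycle c xs \<and> length xs = 2*n + 2*m \<and> (\<forall>i. xi i \<in> set xs) \<and> (\<forall>j. yi j \<in> set xs)"
proof -
  define L where "L = 2*n + 2*m"
  define g where "g t = (if t < k1 then xi (a + int t) else if t < k1+2 then yi (j0 - (int t - int k1))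
      else if t < 2*n+2 then xi (a + int t - 2) else yi (j0 - (int t - 2 * int n)))" for t
  define xs where "xs = map g [0..<L]"
  have len: "length xs = L" unfolding xs_def by simp
  have nth: "t < L \<Longrightarrow> xs ! t = g t" for t unfolding xs_def by simp
  define key where "key t = (if t < k1 then (True, int t) else if t < k1+2 then (False, int t - int k1)
      else if t < 2*n+2 then (True, int t - 2) else (False, int t - 2 * int n))" for t
  define G where "G p = (if fst p then xi (a + snd p) else yi (j0 - snd p))" for p
  have gG: "g t = G (key t)" for t unfolding g_def G_def key_def by (simp add: algebra_simps)
  have keyinj: "inj_on key {0..<L}"
  proof (rule inj_onI)
    fix t t' assume "t \<in> {0..<L}" "t' \<in> {0..<L}" "key t = key t'"
    then show "t = t'" using k1 unfolding key_def by (simp split: if_splits)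
  qed
  have keyr: "fst (key t) \<Longrightarrow> 0 \<le> snd (key t) \<and> snd (key t) < 2 * int n"
     "\<not> fst (key t) \<Longrightarrow> t < L \<Longrightarrow> 0 \<le> snd (key t) \<and> snd (key t) < 2 * int m" for t
    using k1 m2 unfolding key_def L_def by (auto split: if_splits)
  have Ginj: "inj_on G (key ` {0..<L})"
  proof (rule inj_onI)
    fix p p' assume p: "p \<in> key ` {0..<L}" and p': "p' \<in> key ` {0..<L}" and e: "G p = G p'"
    obtain t where t: "t < L" "p = key t" using p by auto
    obtain t' where t': "t' < L" "p' = key t'" using p' by auto
    show "p = p'"
    proof (cases "fst p"; cases "fst p'")
      assume "fst p" "fst p'"
      then show ?thesis using e keyr(1)[of t] keyr(1)[of t'] t t' xi_off[of a "snd p" "snd p'"]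
        unfolding G_def by (simp add: prod_eq_iff)
    next
      assume "\<not> fst p" "\<not> fst p'"
      then show ?thesis using e keyr(2)[of t] keyr(2)[of t'] t t' yi_off[of j0 "snd p" "snd p'"]
        unfolding G_def by (simp add: prod_eq_iff)
    next
      assume "fst p" "\<not> fst p'" then show ?thesis using e xy unfolding G_def by simp
    next
      assume "\<not> fst p" "fst p'" then show ?thesis using e xy unfolding G_def by (simp add: xy[symmetric])
    qed
  qed
  have inj: "inj_on g {0..<L}"
  proof -
    have "inj_on (G \<circ> key) {0..<L}" using keyinj Ginj by (rule comp_inj_on)
    moreover have "g = G \<circ> key" using gG by auto
    ultimately show ?thesis by simp
  qed
  have dist: "distinct xs" unfolding xs_def using inj by (simp add: distinct_map)
  have al0: "altc px (a + int k1 - 1) = altc py j0" using h1 unfolding A_def al_def by simp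
  have ytr: "altc py J = altc px (a + int k1 - 1 + (J - j0))" for J by (rule altc_transfer[OF al0])
  have Lm: "2 * n + 2 < L" using m2 unfolding L_def by simp
  have edge: "c (xs ! t) (xs ! ((t+1) mod L)) = Some (altc (altc px a) (int t))" if t: "t < L" for t
  proof -
    have tgt: "altc (altc px a) (int t) = altc px (a + int t)" by (rule altc_shift)
    consider (x1) "t + 1 < k1" | (xy1) "t + 1 = k1" | (y1) "t = k1" | (yx1) "t = k1 + 1"
      | (x2) "k1 + 2 \<le> t" "t + 1 < 2*n+2" | (xy2) "t = 2*n+1" | (y2) "2*n+2 \<le> t" "t + 1 < L"
      | (last) "t + 1 = L"
      using t k1 by linarith
    then show ?thesis
    proof cases
      case x1
      have "xs ! t = xi (a + int t)" "xs ! ((t+1) mod L) = xi (a + int t + 1)"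
        using nth[of t] nth[of "t+1"] x1 t k1 Lm unfolding g_def by (simp_all add: algebra_simps)
      then show ?thesis using xedge[of "a + int t"] unfolding tgt by simp
    next
      case xy1
      have e: "a + int t = a + int k1 - 1" using xy1 by simp
      have "xs ! t = xi (a + int t)" "xs ! ((t+1) mod L) = yi j0"
        using nth[of t] nth[of "t+1"] t k1 Lm unfolding g_def xy1[symmetric] by simp_all
      moreover have "c (xi (a + int t)) (yi j0) = Some (altc px (a + int t))"
        using h1 unfolding A_def by (simp add: e)
      ultimately show ?thesis unfolding tgt by simp
    next
      case y1
      have "xs ! t = yi j0" "xs ! ((t+1) mod L) = yi (j0 - 1)"
        using nth[of t] nth[of "t+1"] y1 t k1 Lm unfolding g_def by (simp_all add: algebra_simps)
      moreover have "c (yi j0) (yi (j0 - 1)) = Some (altc py (j0 - 1))" using yedge[of "j0 - 1"] csym by simp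
      moreover have "altc py (j0 - 1) = altc px (a + int t)"
        unfolding ytr by (rule altc_par) (use y1 in simp)
      ultimately show ?thesis unfolding tgt by simp
    next
      case yx1
      have "xs ! t = yi (j0 - 1)" "xs ! ((t+1) mod L) = xi (a + int k1)"
        using nth[of t] nth[of "t+1"] yx1 t k1 Lm unfolding g_def by (simp_all add: algebra_simps)
      moreover have "c (yi (j0 - 1)) (xi (a + int k1)) = Some (altc px (a + int k1 + 1))"
        using h2 csym unfolding B_alt by simp
      moreover have "a + int k1 + 1 = a + int t" using yx1 by simp
      ultimately show ?thesis unfolding tgt by simp
    next
      case x2
      have "xs ! t = xi (a + int t - 2)" "xs ! ((t+1) mod L) = xi (a + int t - 2 + 1)"
        using nth[of t] nth[of "t+1"] x2 t k1 Lm unfolding g_def by (simp_all add: algebra_simps)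
      moreover have "altc px (a + int t - 2) = altc px (a + int t)" by (rule altc_par) simp
      ultimately show ?thesis using xedge[of "a + int t - 2"] unfolding tgt by simp
    next
      case xy2
      have "xs ! t = xi (a + 2 * int n - 1)" "xs ! ((t+1) mod L) = yi (j0 - 2)"
        using nth[of t] nth[of "t+1"] xy2 t k1 Lm unfolding g_def by (simp_all add: algebra_simps)
      moreover have "xi (a + 2 * int n - 1) = xi (a - 1)" using xper_add[of "a - 1" 1] by (simp add: algebra_simps)
      moreover have "c (xi (a - 1)) (yi (j0 - 2)) = Some (altc px (a - 1))" using h3 unfolding A_def by simp
      moreover have "altc px (a - 1) = altc px (a + int t)" by (rule altc_par) (use xy2 in simp)
      ultimately show ?thesis unfolding tgt by simp
    next
      case y2
      define J where "J = j0 - (int t - 2 * int n)"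
      have "xs ! t = yi J" "xs ! ((t+1) mod L) = yi (J - 1)"
        using nth[of t] nth[of "t+1"] y2 t k1 Lm unfolding g_def J_def by (simp_all add: algebra_simps)
      moreover have "c (yi J) (yi (J - 1)) = Some (altc py (J - 1))" using yedge[of "J - 1"] csym by simp
      moreover have "altc py (J - 1) = altc px (a + int t)"
        unfolding ytr by (rule altc_par) (use k1 in \<open>simp add: J_def\<close>)
      ultimately show ?thesis unfolding tgt by simp
    next
      case last
      have ti: "int t = 2 * int m + 2 * int n - 1" using last unfolding L_def by simp
      have "xs ! t = yi (j0 - (2 * int m - 1))" "xs ! ((t+1) mod L) = xi a"
        using nth[of t] nth[of 0] last t k1 Lm unfolding g_def L_def by (simp_all add: ti algebra_simps)
      moreover have "yi (j0 - (2 * int m - 1)) = yi (j0 + 1)" using yper_add[of "j0 + 1" "-1"] by (simp add: algebra_simps)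
      moreover have "c (yi (j0 + 1)) (xi a) = Some (altc px (a + 1))" using h4 csym unfolding B_alt by simp
      moreover have "altc px (a + 1) = altc px (a + int t)" by (rule altc_par) (simp add: ti)
      ultimately show ?thesis unfolding tgt by simp
    qed
  qed
  have "alt_cycle c xs"
    by (rule alt_from_col[where p = "altc px a"]) (use dist len edge n2 in \<open>auto simp: L_def\<close>)
  moreover have "xi i \<in> set xs" for i
  proof -
    define r where "r = (i - a) mod (2 * int n)"
    have r: "0 \<le> r" "r < 2 * int n" using n2 unfolding r_def by simp_all
    have xr: "xi i = xi (a + r)"
    proof -
      have "(a + r) mod (2 * int n) = i mod (2 * int n)" unfolding r_def by (simp add: mod_add_right_eq)
      then show ?thesis using xper by metis
    qed
    show ?thesis
    proof (cases "r < int k1")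
      case True
      then have nr: "nat r < k1" "int (nat r) = r" using r by auto
      have "xs ! nat r = xi i" using nth[of "nat r"] r xr nr k1 unfolding g_def L_def by simp
      moreover have "nat r < length xs" using r len unfolding L_def by simp
      ultimately show ?thesis by (metis nth_mem)
    next
      case False
      then have nr: "\<not> nat r + 2 < k1 + 2" "nat r + 2 < 2 * n + 2" "int (nat r) = r" using r by auto
      have "xs ! (nat r + 2) = xi i" using nth[of "nat r + 2"] r xr m2 nr unfolding g_def L_def by simp
      moreover have "nat r + 2 < length xs" using r len m2 unfolding L_def by simp
      ultimately show ?thesis by (metis nth_mem)
    qed
  qed
  moreover have "yi j \<in> set xs" for j
  proof -
    define r where "r = (j0 - j) mod (2 * int m)"
    have r: "0 \<le> r" "r < 2 * int m" using m2 unfolding r_def by simp_all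
    have yr: "yi j = yi (j0 - r)"
    proof -
      have "(j0 - r) mod (2 * int m) = j mod (2 * int m)" unfolding r_def by (simp add: mod_diff_right_eq)
      then show ?thesis using yper by metis
    qed
    show ?thesis
    proof (cases "r < 2")
      case True
      then have nr: "nat r < 2" "int (nat r) = r" using r by auto
      have "xs ! (k1 + nat r) = yi j" using nth[of "k1 + nat r"] r yr k1 m2 nr unfolding g_def L_def by simp
      moreover have "k1 + nat r < length xs" using r len k1 m2 True unfolding L_def by simp
      ultimately show ?thesis by (metis nth_mem)
    next
      case False
      then have nr: "2 \<le> nat r" "int (nat r) = r" using r by auto
      have "xs ! (2 * n + nat r) = yi j" using nth[of "2 * n + nat r"] r yr k1 nr unfolding g_def L_def by simp
      moreover have "2 * n + nat r < length xs" using r len unfolding L_def by simp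
      ultimately show ?thesis by (metis nth_mem)
    qed
  qed
  ultimately show ?thesis using len unfolding L_def by blast
qed
end


context twocyc begin

lemma fin:
  assumes k: "1 \<le> k1" "k1 \<le> 2*n" "1 \<le> k2" "k2 \<le> 2*m" "k1 + k2 = l" "4 \<le> l" "even l"
    and rw: "\<And>a. \<exists>j. A a j \<and> B a (j + int k1 - int k2)"
    and v: "v \<in> range xi \<union> range yi"
  shows "\<exists>xs. alt_cycle c xs \<and> length xs = l \<and> v \<in> set xs"
proof -
  have sol: "\<exists>xs. alt_cycle c xs \<and> length xs = l \<and> xi (a + t) \<in> set xs \<and> yi (j + int k1 - 1 + t) \<in> set xs"
    if "A a j" "B a (j + int k1 - int k2)" for a j t
  proof -
    have "A (a + t + int k1 - 1) (j + int k1 - 1 + t)"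
      using A_shift[of a "t + int k1 - 1" j] that(1) by (simp add: algebra_simps)
    moreover have "B (a + t) (j + int k1 - 1 + t - int k2 + 1)"
      using B_shift[of a t "j + int k1 - int k2"] that(2) by (simp add: algebra_simps)
    ultimately show ?thesis using twoseg[of k1 k2 "a + t" "j + int k1 - 1 + t"] k by auto
  qed
  from v show ?thesis
  proof
    assume "v \<in> range xi"
    then obtain a where a: "v = xi a" by auto
    obtain j where "A a j" "B a (j + int k1 - int k2)" using rw by blast
    then show ?thesis using sol[of a j 0] a by auto
  next
    assume "v \<in> range yi"
    then obtain j1 where a: "v = yi j1" by auto
    obtain j where j: "A 0 j" "B 0 (j + int k1 - int k2)" using rw by blast
    show ?thesis using sol[OF j, of "j1 - (j + int k1 - 1)"] a by auto
  qed
qed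

lemma al_par: "al i j \<Longrightarrow> al i j' \<Longrightarrow> even (j - j')"
  unfolding al_def by (auto simp: altc_eq_iff)

theorem core:
  assumes v: "v \<in> range xi \<union> range yi" and l: "even l"
    "(4 \<le> l \<and> l \<le> 4 * min n m) \<or> (2 * max n m \<le> l \<and> l \<le> 2*n + 2*m)"
  shows "\<exists>xs. alt_cycle c xs \<and> length xs = l \<and> v \<in> set xs"
proof (cases "l = 2*n + 2*m")
  case True
  obtain j where j: "A 0 j" "B 0 (j + -2)" using row[of "-2" 0] by auto
  obtain j' where j': "A 0 j'" "B 0 (j' + 2)" using row[of 2 0] by auto
  define N where "N = 2 * int n"
  have Npos: "N \<ge> 4" using n2 unfolding N_def by simp
  define r where "r = (j' - j) mod N"
  define q where "q = (j' - j) div N"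
  have rq: "j' = j + r + N * q" unfolding r_def q_def by (simp add: mod_div_mult_eq algebra_simps)
  have r0: "0 \<le> r" "r < N" using Npos unfolding r_def by simp_all
  have "even (j' - j)" using al_par j(1) j'(1) unfolding A_def by blast
  then have rev: "even r" unfolding r_def N_def by (simp add: even_iff_mod_2_eq_zero mod_mod_cancel)
  have rne: "r \<noteq> N - 2"
  proof
    assume "r = N - 2"
    then have "j' + 2 = j + N * (q + 1)" using rq by (simp add: algebra_simps)
    then have "B 0 (j + 2 * int n * (q+1) + 2 * int m * 0)" using j'(2) unfolding N_def by simp
    then have "B 0 j" using B_perj by blast
    then show False using j(1) unfolding B_def by simp
  qed
  have rle: "r \<le> N - 4"
  proof -
    obtain e where e: "r = 2 * e" using rev by (rule evenE)
    show ?thesis using r0 rne e unfolding N_def by presburger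
  qed
  define k1 where "k1 = nat (2 + r)"
  have k1i: "int k1 = 2 + r" unfolding k1_def using r0 by simp
  have k1b: "1 \<le> k1" "k1 < 2 * n" "even k1"
  proof -
    have "int k1 \<ge> 1" "int k1 < 2 * int n" using k1i r0 rle unfolding N_def by linarith+
    moreover have "even (int k1)" using k1i rev by simp
    ultimately show "1 \<le> k1" "k1 < 2 * n" "even k1" by simp_all
  qed
  define a where "a = 1 - int k1"
  have h1: "A (a + int k1 - 1) j" using j(1) unfolding a_def by simp
  have h2: "B (a + int k1) (j - 1)" using B_shift[of 0 1 "j - 2"] j(2) unfolding a_def by simp
  have h3: "A (a - 1) (j - 2)"
  proof -
    have "A 0 (j + r + N * q)" using j'(1) rq by simp
    then have "A 0 (j + r)" using A_perj[of 0 "j + r" q 0] unfolding N_def by simp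
    then show ?thesis using A_shift[of "a - 1" "int k1" "j - 2"] unfolding a_def by (simp add: k1i algebra_simps)
  qed
  have h4: "B a (j + 1)"
  proof -
    have "B 0 (j + r + 2 + N * q)" using j'(2) rq by (simp add: algebra_simps)
    then have "B 0 (j + r + 2)" using B_perj[of 0 "j + r + 2" q 0] unfolding N_def by simp
    then show ?thesis using B_shift[of a "int k1 - 1" "j + 1"] unfolding a_def by (simp add: k1i algebra_simps)
  qed
  obtain xs where "alt_cycle c xs" "length xs = 2*n + 2*m" "\<forall>i. xi i \<in> set xs" "\<forall>j. yi j \<in> set xs"
    using hamcyc[OF k1b h1 h2 h3 h4] by blast
  then show ?thesis using True v by auto
next
  case False
  obtain h where lh: "l = 2 * h" using l(1) by (rule evenE)
  have le: "l < 2*n + 2*m" using False l(2) by auto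
  show ?thesis
  proof (cases "2 * max n m \<le> l")
    case True
    define s where "s = n + m - h"
    have s: "1 \<le> s" "s \<le> n" "s \<le> m" using True le lh n2 m2 unfolding s_def by (auto simp: max_def split: if_splits)
    define k1 where "k1 = 2*n - s - 1"
    define k2 where "k2 = 2*m - s + 1"
    have kk: "1 \<le> k1" "k1 \<le> 2*n" "1 \<le> k2" "k2 \<le> 2*m" "k1 + k2 = l" "4 \<le> l"
      using s n2 m2 lh le True unfolding k1_def k2_def s_def by (auto simp: max_def split: if_splits)
    have kd: "int k1 - int k2 = -2 + 2 * int n * 1 + 2 * int m * (-1)"
      using s n2 unfolding k1_def k2_def by simp
    have rw: "\<exists>j. A a j \<and> B a (j + int k1 - int k2)" for a
    proof -
      obtain j where j: "A a j" "B a (j + -2)" using row[of "-2" a] by auto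
      have "B a (j + -2 + 2 * int n * 1 + 2 * int m * (-1))" using j(2) B_perj by blast
      moreover have "j + -2 + 2 * int n * 1 + 2 * int m * (-1) = j + int k1 - int k2" using kd by simp
      ultimately have "B a (j + int k1 - int k2)" by metis
      then show ?thesis using j(1) by blast
    qed
    show ?thesis by (rule fin[OF kk l(1) rw v])
  next
    case small: False
    then have sm: "4 \<le> l" "l \<le> 4 * n" "l \<le> 4 * m" using l(2) by auto
    show ?thesis
    proof (cases "h + 1 \<le> 2 * n")
      case True
      have kk: "1 \<le> h + 1" "h + 1 \<le> 2*n" "1 \<le> h - 1" "h - 1 \<le> 2*m" "(h + 1) + (h - 1) = l" "4 \<le> l"
        using True sm lh by auto
      have rw: "\<exists>j. A a j \<and> B a (j + int (h+1) - int (h - 1))" for a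
      proof -
        obtain j where j: "A a j" "B a (j + 2)" using row[of 2 a] by auto
        have "int (h+1) - int (h - 1) = 2" using sm lh by simp
        then show ?thesis using j by (metis add_diff_eq)
      qed
      show ?thesis by (rule fin[OF kk l(1) rw v])
    next
      case False
      then have h: "h = 2 * n" "h < 2 * m" using sm lh le by auto
      have kk: "1 \<le> h - 1" "h - 1 \<le> 2*n" "1 \<le> h + 1" "h + 1 \<le> 2*m" "(h - 1) + (h + 1) = l" "4 \<le> l"
        using h sm lh n2 by auto
      have rw: "\<exists>j. A a j \<and> B a (j + int (h - 1) - int (h + 1))" for a
      proof -
        obtain j where j: "A a j" "B a (j + -2)" using row[of "-2" a] by auto
        have "int (h - 1) - int (h + 1) = -2" using sm lh by simp
        then show ?thesis using j by (metis add_diff_eq)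
      qed
      show ?thesis by (rule fin[OF kk l(1) rw v])
    qed
  qed
qed

end


definition cidx :: "'a list \<Rightarrow> int \<Rightarrow> 'a" where
  "cidx C i = C ! nat (i mod int (length C))"

lemma nat_mod_succ:
  assumes "L > 0"
  shows "nat ((i + 1) mod int L) = (nat (i mod int L) + 1) mod L"
proof -
  have "int ((nat (i mod int L) + 1) mod L) = (int (nat (i mod int L)) + 1) mod int L"
    by (simp only: of_nat_mod of_nat_add of_nat_1)
  also have "\<dots> = (i mod int L + 1) mod int L"
  proof -
    have nn: "int (nat (i mod int L)) = i mod int L" using assms by simp
    show ?thesis by (simp only: nn)
  qed
  also have "\<dots> = (i + 1) mod int L" by (simp add: mod_add_left_eq)
  finally show ?thesis by (metis nat_int)
qed

lemma nat_mod_pred: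
  assumes "L > 0"
  shows "nat ((i - 1) mod int L) = (nat (i mod int L) + L - 1) mod L"
proof -
  have "int ((nat (i mod int L) + L - 1) mod L) = (int (nat (i mod int L)) + int L - 1) mod int L"
    using assms by (simp add: of_nat_mod of_nat_diff)
  also have "\<dots> = (i mod int L + int L - 1) mod int L" using assms by simp
  also have "\<dots> = (i - 1) mod int L"
  proof -
    have "(i mod int L + int L - 1) mod int L = (i mod int L - 1 + int L * 1) mod int L" by (simp add: algebra_simps)
    also have "\<dots> = (i mod int L - 1) mod int L" by (rule mod_mult_self2)
    also have "\<dots> = (i - 1) mod int L" by (simp add: mod_diff_left_eq)
    finally show ?thesis .
  qed
  finally show ?thesis by (metis nat_int)
qed

lemma cidx_mem: "C \<noteq> [] \<Longrightarrow> cidx C i \<in> set C"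
  unfolding cidx_def by (rule nth_mem) (simp add: nat_less_iff)

lemma cidx_nth: "t < length C \<Longrightarrow> cidx C (int t) = C ! t"
  unfolding cidx_def by (simp add: nat_mod_as_int[symmetric])

lemma cidx_range: "C \<noteq> [] \<Longrightarrow> range (cidx C) = set C"
proof
  assume "C \<noteq> []"
  then show "range (cidx C) \<subseteq> set C" using cidx_mem by blast
  show "set C \<subseteq> range (cidx C)"
  proof
    fix x assume "x \<in> set C"
    then obtain t where "t < length C" "C ! t = x" by (auto simp: in_set_conv_nth)
    then show "x \<in> range (cidx C)" using cidx_nth by (metis rangeI)
  qed
qed

lemma cidx_eq: "distinct C \<Longrightarrow> C \<noteq> [] \<Longrightarrow> cidx C u = cidx C u' \<Longrightarrow> u mod int (length C) = u' mod int (length C)"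
proof -
  assume d: "distinct C" and ne: "C \<noteq> []" and e: "cidx C u = cidx C u'"
  have Lp: "int (length C) > 0" using ne by simp
  have a: "nat (u mod int (length C)) < length C" "nat (u' mod int (length C)) < length C"
    using Lp by (simp_all add: nat_less_iff)
  have "nat (u mod int (length C)) = nat (u' mod int (length C))"
    using e a d unfolding cidx_def by (simp add: nth_eq_iff_index_eq)
  then show ?thesis using Lp by (simp add: nat_eq_iff2)
qed

lemma cidx_per: "cidx C (i mod int (length C)) = cidx C i"
  unfolding cidx_def by simp

lemma cidx_inj: "distinct C \<Longrightarrow> C \<noteq> [] \<Longrightarrow> inj_on (cidx C) {0..<int (length C)}"
  by (rule inj_onI) (drule (2) cidx_eq, simp)

lemma cyc_col:
  assumes ac: "alt_cycle c' C" and len: "length C = 2 * n"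
    and agree: "\<forall>u\<in>set C. \<forall>v\<in>set C. c u v = c' u v"
  shows "2 \<le> n \<and> (\<exists>p. \<forall>i. c (cidx C i) (cidx C (i+1)) = Some (altc p i))"
proof -
  let ?L = "length C"
  have L3: "3 \<le> ?L" using ac unfolding alt_cycle_def by simp
  then have n2: "2 \<le> n" using len by simp
  have Lp: "?L > 0" using L3 by linarith
  define k where "k t = the (c' (C ! t) (C ! ((t+1) mod ?L)))" for t
  have ks: "c' (C ! t) (C ! ((t+1) mod ?L)) = Some (k t)" if "t < ?L" for t
    using ac that unfolding alt_cycle_def k_def by auto
  have kstep: "k (t+1) = flip (k t)" if "t + 1 < ?L" for t
  proof -
    have tl: "t < ?L" using that by simp
    have "c' (C ! t) (C ! ((t + 1) mod ?L)) \<noteq> c' (C ! ((t + 1) mod ?L)) (C ! ((t + 2) mod ?L))"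
    proof -
      have "\<forall>i < ?L. c' (C ! i) (C ! ((i + 1) mod ?L)) \<noteq> c' (C ! ((i + 1) mod ?L)) (C ! ((i + 2) mod ?L))"
        using ac unfolding alt_cycle_def by (elim conjE)
      then show ?thesis using tl by blast
    qed
    moreover have "(t + 1) mod ?L = t + 1" using that by simp
    moreover have "(t + 2) mod ?L = (t + 1 + 1) mod ?L" by simp
    ultimately have "k t \<noteq> k (t+1)" using ks[of t] ks[of "t+1"] that by auto
    then show ?thesis by (metis color_other)
  qed
  have kalt: "t < ?L \<Longrightarrow> k t = altc (k 0) (int t)" for t
  proof (induction t)
    case 0 then show ?case by simp
  next
    case (Suc t)
    then have "k (Suc t) = flip (k t)" using kstep[of t] by simp
    then show ?case using Suc by (simp add: altc_flip add.commute)
  qed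
  have "c (cidx C i) (cidx C (i+1)) = Some (altc (k 0) i)" for i
  proof -
    define t where "t = nat (i mod int ?L)"
    have t: "t < ?L" unfolding t_def using Lp by (simp add: nat_less_iff)
    have c1: "cidx C i = C ! t" unfolding cidx_def t_def ..
    have c2: "cidx C (i+1) = C ! ((t+1) mod ?L)" unfolding cidx_def t_def using nat_mod_succ[OF Lp] by simp
    have mem: "C ! t \<in> set C" "C ! ((t+1) mod ?L) \<in> set C" using t Lp by simp_all
    have "c (cidx C i) (cidx C (i+1)) = Some (k t)" using agree mem ks[OF t] c1 c2 by simp
    moreover have "altc (k 0) (int t) = altc (k 0) i"
    proof (rule altc_par)
      have "int t = i mod int ?L" unfolding t_def using Lp by simp
      moreover have "even (int ?L)" using len by simp
      moreover have "even (i mod int ?L) \<longleftrightarrow> even i" using \<open>even (int ?L)\<close>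
        by (simp add: even_iff_mod_2_eq_zero mod_mod_cancel)
      ultimately show "even (int t - i)" by simp
    qed
    ultimately show ?thesis using kalt[OF t] by simp
  qed
  then show ?thesis using n2 by blast
qed

lemma nbr_fwd:
  assumes "C \<noteq> []" "c (cidx C i) (cidx C (i+1)) = Some k"
  shows "cyc_nbr c C k (cidx C i) (cidx C (i+1))"
proof -
  have Lp: "length C > 0" using assms by simp
  define t where "t = nat (i mod int (length C))"
  have "t < length C" unfolding t_def using Lp by (simp add: nat_less_iff)
  moreover have "C ! t = cidx C i" unfolding cidx_def t_def ..
  moreover have "cidx C (i+1) = C ! ((t+1) mod length C)" unfolding cidx_def t_def using nat_mod_succ[OF Lp] by simp
  ultimately show ?thesis unfolding cyc_nbr_def using assms(2) by blast
qed

lemma nbr_bwd: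
  assumes "C \<noteq> []" "c (cidx C i) (cidx C (i - 1)) = Some k"
  shows "cyc_nbr c C k (cidx C i) (cidx C (i - 1))"
proof -
  have Lp: "length C > 0" using assms by simp
  define t where "t = nat (i mod int (length C))"
  have "t < length C" unfolding t_def using Lp by (simp add: nat_less_iff)
  moreover have "C ! t = cidx C i" unfolding cidx_def t_def ..
  moreover have "cidx C (i - 1) = C ! ((t + length C - 1) mod length C)" unfolding cidx_def t_def using nat_mod_pred[OF Lp] by simp
  ultimately show ?thesis unfolding cyc_nbr_def using assms(2) by blast
qed



lemma altc_neg[simp]: "altc p (- j) = altc p j"
  unfolding altc_def by simp

theorem proposition3p11:
  fixes V1 V2 V :: "'a set" and c1 c2 c :: "'a \<Rightarrow> 'a \<Rightarrow> color option"
    and C1 C2 :: "'a list" and n m :: nat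
  assumes G1: "colgraph V1 c1" and G2: "colgraph V2 c2" and disj: "V1 \<inter> V2 = {}"
    and C1: "alt_cycle c1 C1" "set C1 = V1" "length C1 = 2 * n"
    and C2: "alt_cycle c2 C2" "set C2 = V2" "length C2 = 2 * m"
    and G: "in_colored_sum V c V1 c1 V2 c2"
    and nogood: "no_good_pair c C1 C2"
    and ns1: "\<exists>v \<in> V1. non_singular c v V2"
    and ns2: "\<exists>w \<in> V2. non_singular c w V1"
  shows "\<forall>v \<in> V. \<forall>l. even l \<and>
           ((4 \<le> l \<and> l \<le> 4 * min n m) \<or> (2 * max n m \<le> l \<and> l \<le> 2 * n + 2 * m)) \<longrightarrow>
           (\<exists>xs. alt_cycle c xs \<and> length xs = l \<and> v \<in> set xs)"
proof -
  have colV: "colgraph V c" and VV: "V = V1 \<union> V2" and ag1: "\<forall>u \<in> V1. \<forall>v \<in> V1. c u v = c1 u v"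
    and ag2: "\<forall>u \<in> V2. \<forall>v \<in> V2. c u v = c2 u v" and crossE: "\<forall>u \<in> V1. \<forall>w \<in> V2. c u w \<noteq> None"
    using G unfolding in_colored_sum_def by auto
  have csym: "\<And>u v. c u v = c v u" using colV unfolding colgraph_def by auto
  define xi where "xi = cidx C1"
  define yi where "yi = cidx C2"
  obtain px where n2: "2 \<le> n" and xedge: "\<And>i. c (xi i) (xi (i+1)) = Some (altc px i)"
    using cyc_col[OF C1(1) C1(3)] ag1 C1(2) unfolding xi_def by metis
  obtain py where m2: "2 \<le> m" and yedge: "\<And>j. c (yi j) (yi (j+1)) = Some (altc py j)"
    using cyc_col[OF C2(1) C2(3)] ag2 C2(2) unfolding yi_def by metis
  have ne1: "C1 \<noteq> []" and ne2: "C2 \<noteq> []" using n2 m2 C1(3) C2(3) by auto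
  have d1: "distinct C1" and d2: "distinct C2" using C1(1) C2(1) unfolding alt_cycle_def by auto
  have rx: "range xi = V1" using cidx_range[OF ne1] C1(2) unfolding xi_def by simp
  have ry: "range yi = V2" using cidx_range[OF ne2] C2(2) unfolding yi_def by simp
  have xper: "\<And>i. xi (i mod (2 * int n)) = xi i" unfolding xi_def using cidx_per[of C1] C1(3) by simp
  have yper: "\<And>j. yi (j mod (2 * int m)) = yi j" unfolding yi_def using cidx_per[of C2] C2(3) by simp
  have xinj: "inj_on xi {0..<2 * int n}" unfolding xi_def using cidx_inj[OF d1 ne1] C1(3) by simp
  have yinj: "inj_on yi {0..<2 * int m}" unfolding yi_def using cidx_inj[OF d2 ne2] C2(3) by simp
  have xy: "\<And>i j. xi i \<noteq> yi j" using rx ry disj by (metis disjoint_iff rangeI)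
  have cross: "\<And>i j. c (xi i) (yi j) \<noteq> None" using rx ry crossE by (metis rangeI)
  have ng: "\<And>v w v' w' k. v \<in> set C1 \<Longrightarrow> w \<in> set C2 \<Longrightarrow> c v w = Some k \<Longrightarrow>
      cyc_nbr c C1 k v v' \<Longrightarrow> cyc_nbr c C2 k w w' \<Longrightarrow> c v' w' \<noteq> Some k"
    using nogood unfolding no_good_pair_def by blast
  have xm: "xi i \<in> set C1" for i using rx C1(2) by auto
  have ym: "yi j \<in> set C2" for j using ry C2(2) by auto
  have step1: "c (xi (i+1)) (yi (j+1)) = Some (altc px (i+1))"
    if "altc px i = altc py j" "c (xi i) (yi j) = Some (altc px i)" for i j
  proof -
    have n1: "cyc_nbr c C1 (altc px i) (xi i) (xi (i+1))" using nbr_fwd[OF ne1] xedge unfolding xi_def by blast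
    have n2': "cyc_nbr c C2 (altc px i) (yi j) (yi (j+1))" using nbr_fwd[OF ne2] yedge that(1) unfolding yi_def by metis
    have "c (xi (i+1)) (yi (j+1)) \<noteq> Some (altc px i)" using ng[OF xm ym that(2) n1 n2'] .
    then show ?thesis using cross opt_other altc_flip by metis
  qed
  have yedge2: "c (yi (- j)) (yi (- (j + 1))) = Some (altc (flip py) j)" for j
  proof -
    have "c (yi (- j)) (yi (- (j + 1))) = c (yi (- j - 1)) (yi (- j - 1 + 1))" using csym by simp
    also have "\<dots> = Some (altc py (- j - 1))" by (rule yedge)
    also have "altc py (- j - 1) = altc (flip py) j" unfolding altc_flip by (rule altc_par) simp
    finally show ?thesis .
  qed
  have step2: "c (xi (i+1)) (yi (- (j+1))) = Some (altc px (i+1))"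
    if "altc px i = altc (flip py) j" "c (xi i) (yi (- j)) = Some (altc px i)" for i j
  proof -
    have n1: "cyc_nbr c C1 (altc px i) (xi i) (xi (i+1))" using nbr_fwd[OF ne1] xedge unfolding xi_def by blast
    have e: "c (yi (- j)) (yi (- j - 1)) = Some (altc px i)" using yedge2[of j] that(1) by simp
    have n2': "cyc_nbr c C2 (altc px i) (yi (- j)) (yi (- j - 1))" using nbr_bwd[OF ne2] e unfolding yi_def by blast
    have "c (xi (i+1)) (yi (- j - 1)) \<noteq> Some (altc px i)" using ng[OF xm ym that(2) n1 n2'] .
    then show ?thesis using cross opt_other altc_flip by (metis minus_diff_eq uminus_add_conv_diff diff_minus_eq_add add.commute)
  qed
  have yper2: "yi (- (j mod (2 * int m))) = yi (- j)" for j
  proof -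
    have "yi (- (j mod (2 * int m))) = yi ((- (j mod (2 * int m))) mod (2 * int m))" using yper by simp
    also have "(- (j mod (2 * int m))) mod (2 * int m) = (- j) mod (2 * int m)" by (rule mod_minus_eq)
    also have "yi \<dots> = yi (- j)" using yper by simp
    finally show ?thesis .
  qed
  have yinj2: "inj_on (\<lambda>j. yi (- j)) {0..<2 * int m}"
  proof (rule inj_onI)
    fix j j' assume j: "j \<in> {0..<2 * int m}" and j': "j' \<in> {0..<2 * int m}" and e: "yi (- j) = yi (- j')"
    have "(- j) mod (2 * int m) = (- j') mod (2 * int m)"
      using cidx_eq[OF d2 ne2, of "- j" "- j'"] e C2(3) unfolding yi_def by simp
    then have "(- (- j)) mod (2 * int m) = (- (- j')) mod (2 * int m)" by (rule mod_minus_cong)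
    then show "j = j'" using j j' by simp
  qed
  have rowc: False if "\<And>i j. c (xi i) (yi j) = Some (F i)" for F
  proof -
    obtain v w w' where "v \<in> V1" "w \<in> V2" "w' \<in> V2" "c v w = Some Red" "c v w' = Some Blue"
      using ns1 unfolding non_singular_def by blast
    then show False using that rx ry by (metis imageE option.inject color.distinct(1))
  qed
  have colc: False if "\<And>i j. c (xi i) (yi j) = Some (H j)" for H
  proof -
    obtain w v v' where "w \<in> V2" "v \<in> V1" "v' \<in> V1" "c w v = Some Red" "c w v' = Some Blue"
      using ns2 unfolding non_singular_def by blast
    then show False using that rx ry csym by (metis imageE option.inject color.distinct(1))
  qed
  have colv: "c (xi i) (yi j) = Some (altc px i) \<or> c (xi i) (yi j) = Some (flip (altc px i))" for i j
    using cross opt_other by blast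
  have dich: "((\<exists>i j. altc px i = altc py j \<and> c (xi i) (yi j) = Some (altc px i)) \<and>
               (\<exists>i j. altc px i = altc py j \<and> c (xi i) (yi j) \<noteq> Some (altc px i))) \<or>
              ((\<exists>i j. altc px i \<noteq> altc py j \<and> c (xi i) (yi j) = Some (altc px i)) \<and>
               (\<exists>i j. altc px i \<noteq> altc py j \<and> c (xi i) (yi j) \<noteq> Some (altc px i)))"
  proof (rule ccontr)
    assume nd: "\<not> ?thesis"
    have ao: "altc px i \<noteq> altc py j \<Longrightarrow> altc py j = flip (altc px i)" for i j by (rule color_other)
    consider (AA) "\<forall>i j. altc px i = altc py j \<longrightarrow> c (xi i) (yi j) \<noteq> Some (altc px i)"
                  "\<forall>i j. altc px i \<noteq> altc py j \<longrightarrow> c (xi i) (yi j) \<noteq> Some (altc px i)"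
      | (BB) "\<forall>i j. altc px i = altc py j \<longrightarrow> c (xi i) (yi j) = Some (altc px i)"
             "\<forall>i j. altc px i \<noteq> altc py j \<longrightarrow> c (xi i) (yi j) = Some (altc px i)"
      | (AB) "\<forall>i j. altc px i = altc py j \<longrightarrow> c (xi i) (yi j) \<noteq> Some (altc px i)"
             "\<forall>i j. altc px i \<noteq> altc py j \<longrightarrow> c (xi i) (yi j) = Some (altc px i)"
      | (BA) "\<forall>i j. altc px i = altc py j \<longrightarrow> c (xi i) (yi j) = Some (altc px i)"
             "\<forall>i j. altc px i \<noteq> altc py j \<longrightarrow> c (xi i) (yi j) \<noteq> Some (altc px i)"
      using nd by blast
    then show False
    proof cases
      case AA
      have "c (xi i) (yi j) = Some (flip (altc px i))" for i j using AA colv by metis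
      then show False by (rule rowc)
    next
      case BB
      have "c (xi i) (yi j) = Some (altc px i)" for i j using BB by metis
      then show False by (rule rowc)
    next
      case AB
      have "c (xi i) (yi j) = Some (flip (altc py j))" for i j
        using AB colv ao by (metis flip_flip)
      then show False by (rule colc)
    next
      case BA
      have "c (xi i) (yi j) = Some (altc py j)" for i j
        using BA colv ao by metis
      then show False by (rule colc)
    qed
  qed
  have V: "V = range xi \<union> range yi" using VV rx ry by simp
  have main: "\<exists>xs. alt_cycle c xs \<and> length xs = l \<and> v \<in> set xs"
    if v: "v \<in> V" and l: "even l" "(4 \<le> l \<and> l \<le> 4 * min n m) \<or> (2 * max n m \<le> l \<and> l \<le> 2 * n + 2 * m)" for v l
    using dich
  proof
    assume nc: "(\<exists>i j. altc px i = altc py j \<and> c (xi i) (yi j) = Some (altc px i)) \<and>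
               (\<exists>i j. altc px i = altc py j \<and> c (xi i) (yi j) \<noteq> Some (altc px i))"
    interpret T: twocyc c xi yi n m px py
      by unfold_locales (use n2 m2 xper yper xinj yinj csym xedge yedge xy cross step1 nc in auto)
    show ?thesis using T.core v l V by auto
  next
    assume nc: "(\<exists>i j. altc px i \<noteq> altc py j \<and> c (xi i) (yi j) = Some (altc px i)) \<and>
               (\<exists>i j. altc px i \<noteq> altc py j \<and> c (xi i) (yi j) \<noteq> Some (altc px i))"
    have tr: "altc px i \<noteq> altc py j \<Longrightarrow> altc px i = altc (flip py) (- (- j))" for i j
      using color_other altc_flip by (metis altc_eq_iff flip_neq(1) minus_minus)
    have ncA: "\<exists>i j. altc px i = altc (flip py) j \<and> c (xi i) (yi (- j)) = Some (altc px i)"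
    proof -
      obtain i j where h: "altc px i \<noteq> altc py j" "c (xi i) (yi j) = Some (altc px i)" using nc by blast
      have "altc px i = altc (flip py) (- j) \<and> c (xi i) (yi (- (- j))) = Some (altc px i)" using h tr[of i j] by (simp only: altc_neg minus_minus) simp
      then show ?thesis by blast
    qed
    have ncB: "\<exists>i j. altc px i = altc (flip py) j \<and> c (xi i) (yi (- j)) \<noteq> Some (altc px i)"
    proof -
      obtain i j where h: "altc px i \<noteq> altc py j" "c (xi i) (yi j) \<noteq> Some (altc px i)" using nc by blast
      have "altc px i = altc (flip py) (- j) \<and> c (xi i) (yi (- (- j))) \<noteq> Some (altc px i)" using h tr[of i j] by (simp only: altc_neg minus_minus) simp
      then show ?thesis by blast
    qed
    interpret T: twocyc c xi "\<lambda>j. yi (- j)" n m px "flip py"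
      by unfold_locales (use n2 m2 xper yper2 xinj yinj2 csym xedge yedge2 xy cross step2 ncA ncB in auto)
    have "range (\<lambda>j. yi (- j)) = range yi" by (metis surj_def minus_minus image_image range_eqI subsetI subset_antisym rangeE)
    then show ?thesis using T.core v l V by auto
  qed
  show ?thesis using main by blast
qed

end
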